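(* Let $n\ge 3$. For every initial coloring of the cycle $C_n$, the stabilization time of the Majority Model (MM) is at most $\lceil n/2\rceil-1$, and this bound is tight, i.e., there is an initial coloring of $C_n$ for which the stabilization time equals $\lceil n/2\rceil-1$.
   Context: A coloring of a graph is a map from its nodes to $\{b,w\}$. In the Majority Model (MM), all nodes update simultaneously in each round: a node adopts the color strictly more frequent among its neighbors in the previous round, and keeps its current color in case of a tie. Since MM is deterministic and there are finitely many colorings, from any initial coloring the sequence of colorings eventually enters a cycle of colorings; the stabilization time is the number of rounds needed to reach this cycle. *)

theory Defs
  imports Main
begin

(* Colour b is encoded as True, colour w as False.  A colouring of the cycle C_n
   (nodes 0,...,n-1) is a function nat => bool; only its values on {..<n} matter. *)

definition cycle_nbrs :: "nat \<Rightarrow> nat \<Rightarrow> nat set" where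
  "cycle_nbrs n i = {(i + 1) mod n, (i + n - 1) mod n}"

definition mm_step :: "nat \<Rightarrow> (nat \<Rightarrow> bool) \<Rightarrow> (nat \<Rightarrow> bool)" where
  "mm_step n c = (\<lambda>i.
     let nb = card {j \<in> cycle_nbrs n i. c j};
         nw = card {j \<in> cycle_nbrs n i. \<not> c j}
     in if nb > nw then True else if nw > nb then False else c i)"

definition mm_iter :: "nat \<Rightarrow> nat \<Rightarrow> (nat \<Rightarrow> bool) \<Rightarrow> (nat \<Rightarrow> bool)" where
  "mm_iter n t c = (mm_step n ^^ t) c"

definition col_eq :: "nat \<Rightarrow> (nat \<Rightarrow> bool) \<Rightarrow> (nat \<Rightarrow> bool) \<Rightarrow> bool" where
  "col_eq n c d \<longleftrightarrow> (\<forall>i<n. c i = d i)"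

definition on_cycle_at :: "nat \<Rightarrow> (nat \<Rightarrow> bool) \<Rightarrow> nat \<Rightarrow> bool" where
  "on_cycle_at n c t \<longleftrightarrow> (\<exists>p>0. col_eq n (mm_iter n (t + p) c) (mm_iter n t c))"

definition stab_time :: "nat \<Rightarrow> (nat \<Rightarrow> bool) \<Rightarrow> nat" where
  "stab_time n c = (LEAST t. on_cycle_at n c t)"

end

theory Submission
  imports Defs
begin

definition nx :: "nat \<Rightarrow> nat \<Rightarrow> nat" where "nx n i = Suc i mod n"
definition pv :: "nat \<Rightarrow> nat \<Rightarrow> nat" where "pv n i = (if i = 0 then n - 1 else i - 1)"
definition st :: "nat \<Rightarrow> (nat \<Rightarrow> bool) \<Rightarrow> nat \<Rightarrow> bool" where
  "st n c i \<longleftrightarrow> c i = c (pv n i) \<or> c i = c (nx n i)"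

lemma nx_lt: "i < n \<Longrightarrow> nx n i < n" by (simp add: nx_def)
lemma pv_lt: "i < n \<Longrightarrow> pv n i < n" by (auto simp: pv_def)
lemma pv_nx: "i < n \<Longrightarrow> pv n (nx n i) = i"
  by (auto simp: pv_def nx_def mod_Suc)
lemma nx_pv: "i < n \<Longrightarrow> nx n (pv n i) = i"
  by (auto simp: pv_def nx_def mod_Suc)
lemma nx_ne_pv: "3 \<le> n \<Longrightarrow> i < n \<Longrightarrow> nx n i \<noteq> pv n i"
  by (auto simp: pv_def nx_def mod_Suc)

lemma nbrs: "i < n \<Longrightarrow> cycle_nbrs n i = {nx n i, pv n i}"
proof -
  assume i: "i < n"
  have "(i + n - 1) mod n = pv n i"
  proof (cases "i = 0")
    case True thus ?thesis using i by (simp add: pv_def)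
  next
    case False
    hence "i + n - 1 = (i - 1) + n" by simp
    hence "(i + n - 1) mod n = (i - 1) mod n" by simp
    thus ?thesis using False i by (simp add: pv_def)
  qed
  thus ?thesis by (simp add: cycle_nbrs_def nx_def)
qed

lemma card2: "a \<noteq> b \<Longrightarrow> card {j \<in> {a, b}. P j} = (if P a then 1 else 0) + (if P b then 1 else (0::nat))"
proof -
  assume ab: "a \<noteq> b"
  have "{j \<in> {a, b}. P j} = (if P a then {a} else {}) \<union> (if P b then {b} else {})" by auto
  thus ?thesis using ab by auto
qed

lemma step_eq: "3 \<le> n \<Longrightarrow> i < n \<Longrightarrow>
  mm_step n c i = (if c (pv n i) = c (nx n i) then c (nx n i) else c i)"
  using nx_ne_pv[of n i] card2[of "nx n i" "pv n i" c] card2[of "nx n i" "pv n i" "\<lambda>j. \<not> c j"]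
  by (auto simp: mm_step_def Let_def nbrs)

lemma persist1: "3 \<le> n \<Longrightarrow> i < n \<Longrightarrow> st n c i \<Longrightarrow> mm_step n c i = c i \<and> st n (mm_step n c) i"
proof -
  assume n: "3 \<le> n" and i: "i < n" and s: "st n c i"
  have a: "mm_step n c i = c i" using s by (auto simp: step_eq[OF n i] st_def)
  have "mm_step n c (pv n i) = c (pv n i)" if "c i = c (pv n i)"
    using step_eq[OF n pv_lt[OF i], of c] nx_pv[OF i] that by auto
  moreover have "mm_step n c (nx n i) = c (nx n i)" if "c i = c (nx n i)"
    using step_eq[OF n nx_lt[OF i], of c] pv_nx[OF i] that by auto
  ultimately show ?thesis using a s by (auto simp: st_def)
qed

lemma flip1: "3 \<le> n \<Longrightarrow> i < n \<Longrightarrow> \<not> st n c i \<Longrightarrow> mm_step n c i = (\<not> c i)"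
  by (auto simp: step_eq st_def)

lemma fwd1: "3 \<le> n \<Longrightarrow> j < n \<Longrightarrow> st n c j \<Longrightarrow> st n (mm_step n c) (nx n j)"
proof -
  assume n: "3 \<le> n" and j: "j < n" and s: "st n c j"
  let ?i = "nx n j"
  have i: "?i < n" using nx_lt[OF j] .
  show ?thesis
  proof (cases "st n c ?i")
    case True thus ?thesis using persist1[OF n i] by blast
  next
    case False
    have "mm_step n c ?i = (\<not> c ?i)" using flip1[OF n i False] .
    moreover have "c ?i \<noteq> c j" using False pv_nx[OF j] by (auto simp: st_def)
    moreover have "mm_step n c j = c j" using persist1[OF n j s] by blast
    ultimately show ?thesis using pv_nx[OF j] by (auto simp: st_def)
  qed
qed

lemma bwd1: "3 \<le> n \<Longrightarrow> j < n \<Longrightarrow> st n c j \<Longrightarrow> st n (mm_step n c) (pv n j)"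
proof -
  assume n: "3 \<le> n" and j: "j < n" and s: "st n c j"
  let ?i = "pv n j"
  have i: "?i < n" using pv_lt[OF j] .
  show ?thesis
  proof (cases "st n c ?i")
    case True thus ?thesis using persist1[OF n i] by blast
  next
    case False
    have "mm_step n c ?i = (\<not> c ?i)" using flip1[OF n i False] .
    moreover have "c ?i \<noteq> c j" using False nx_pv[OF j] by (auto simp: st_def)
    moreover have "mm_step n c j = c j" using persist1[OF n j s] by blast
    ultimately show ?thesis using nx_pv[OF j] by (auto simp: st_def)
  qed
qed

lemma iter_Suc: "mm_iter n (Suc t) c = mm_step n (mm_iter n t c)"
  by (simp add: mm_iter_def)
lemma iter_Suc': "mm_iter n (Suc t) c = mm_iter n t (mm_step n c)"
  by (simp add: mm_iter_def funpow_Suc_right del: funpow.simps)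
lemma iter_0: "mm_iter n 0 c = c" by (simp add: mm_iter_def)

lemma fwd: "3 \<le> n \<Longrightarrow> j < n \<Longrightarrow> st n c j \<Longrightarrow> st n (mm_iter n d c) ((j + d) mod n)"
proof (induction d)
  case 0 thus ?case by (simp add: iter_0)
next
  case (Suc d)
  have "(j + Suc d) mod n = nx n ((j + d) mod n)" by (simp add: nx_def mod_Suc_eq)
  thus ?case using fwd1[OF Suc.prems(1) _ Suc.IH[OF Suc.prems]] Suc.prems(1)
    by (simp add: iter_Suc)
qed

lemma bwd: "3 \<le> n \<Longrightarrow> st n c j \<Longrightarrow> k < n \<Longrightarrow> (k + d) mod n = j \<Longrightarrow> st n (mm_iter n d c) k"
proof (induction d arbitrary: k)
  case 0 thus ?case by (simp add: iter_0)
next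
  case (Suc d)
  have k': "nx n k < n" using nx_lt[OF Suc.prems(3)] .
  have "(nx n k + d) mod n = j" using Suc.prems(4) by (simp add: nx_def mod_add_left_eq)
  hence "st n (mm_iter n d c) (nx n k)" using Suc.IH[OF Suc.prems(1,2) k'] by blast
  from bwd1[OF Suc.prems(1) k' this] show ?case using pv_nx[OF Suc.prems(3)] by (simp add: iter_Suc)
qed

lemma persist: "3 \<le> n \<Longrightarrow> i < n \<Longrightarrow> st n (mm_iter n t c) i \<Longrightarrow>
   st n (mm_iter n (t + m) c) i \<and> mm_iter n (t + m) c i = mm_iter n t c i"
proof (induction m)
  case 0 thus ?case by simp
next
  case (Suc m)
  thus ?case using persist1[OF Suc.prems(1,2), of "mm_iter n (t + m) c"] by (simp add: iter_Suc)
qed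

lemma arith_de: "3 \<le> n \<Longrightarrow> j < n \<Longrightarrow> i < n \<Longrightarrow>
  \<exists>d e. d + e = n - 1 \<and> (nx n j + d) mod n = i \<and> (i + e) mod n = j"
proof -
  assume n: "3 \<le> n" and j: "j < n" and i: "i < n"
  show ?thesis
  proof (cases "j = n - 1")
    case True
    hence "nx n j = 0" using n by (simp add: nx_def)
    moreover have "(i + (n - 1 - i)) mod n = j" using True i by simp
    ultimately show ?thesis using i by (intro exI[of _ i] exI[of _ "n - 1 - i"]) auto
  next
    case False
    hence nj: "nx n j = Suc j" using j by (simp add: nx_def)
    show ?thesis
    proof (cases "Suc j \<le> i")
      case True
      have "i + (j + n - i) = j + n" using True i by simp
      hence "(i + (j + n - i)) mod n = j" using j by simp
      thus ?thesis using True nj i by (intro exI[of _ "i - Suc j"] exI[of _ "j + n - i"]) auto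
    next
      case F2: False
      have "(Suc j + (n - 1 - j + i)) mod n = i" using F2 j i by simp
      moreover have "(i + (j - i)) mod n = j" using F2 j by simp
      ultimately show ?thesis using F2 nj j by (intro exI[of _ "n - 1 - j + i"] exI[of _ "j - i"]) auto
    qed
  qed
qed

lemma all_stable: "3 \<le> n \<Longrightarrow> j < n \<Longrightarrow> c j = c (nx n j) \<Longrightarrow> i < n \<Longrightarrow>
   st n (mm_iter n ((n - 1) div 2) c) i"
proof -
  assume n: "3 \<le> n" and j: "j < n" and e: "c j = c (nx n j)" and i: "i < n"
  have sj: "st n c j" using e by (simp add: st_def)
  have sj2: "st n c (nx n j)" using e pv_nx[OF j] by (simp add: st_def)
  obtain d e where de: "d + e = n - 1" "(nx n j + d) mod n = i" "(i + e) mod n = j"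
    using arith_de[OF n j i] by blast
  let ?T = "(n - 1) div 2"
  show ?thesis
  proof (cases "d \<le> ?T")
    case True
    have "st n (mm_iter n d c) i" using fwd[OF n nx_lt[OF j] sj2, of d] de(2) by simp
    from persist[OF n i this, of "?T - d"] True show ?thesis by simp
  next
    case False
    hence "e \<le> ?T" using de(1) by linarith
    have "st n (mm_iter n e c) i" using bwd[OF n sj i de(3)] .
    from persist[OF n i this, of "?T - e"] \<open>e \<le> ?T\<close> show ?thesis by simp
  qed
qed

lemma upper_ex: "3 \<le> n \<Longrightarrow> \<exists>t \<le> (n - 1) div 2. on_cycle_at n c t"
proof -
  assume n: "3 \<le> n"
  show ?thesis
  proof (cases "\<exists>j<n. c j = c (nx n j)")
    case True
    then obtain j where j: "j < n" "c j = c (nx n j)" by blast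
    let ?T = "(n - 1) div 2"
    have "col_eq n (mm_iter n (?T + 1) c) (mm_iter n ?T c)"
      unfolding col_eq_def using persist1[OF n _ all_stable[OF n j]] by (simp add: iter_Suc)
    hence "on_cycle_at n c ?T" unfolding on_cycle_at_def by blast
    thus ?thesis by blast
  next
    case False
    hence alt: "\<And>j. j < n \<Longrightarrow> c j \<noteq> c (nx n j)" by blast
    have u: "\<not> st n c i" if "i < n" for i
      using alt[OF that] alt[OF pv_lt[OF that]] nx_pv[OF that] by (auto simp: st_def)
    have f: "mm_step n c i = (\<not> c i)" if "i < n" for i using flip1[OF n that u[OF that]] .
    have u2: "\<not> st n (mm_step n c) i" if "i < n" for i
      using u[OF that] f[OF that] f[OF pv_lt[OF that]] f[OF nx_lt[OF that]] by (auto simp: st_def)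
    have "col_eq n (mm_iter n (0 + 2) c) (mm_iter n 0 c)"
      unfolding col_eq_def using flip1[OF n _ u2] f
      by (simp add: iter_0 numeral_2_eq_2 iter_Suc)
    hence "on_cycle_at n c 0" unfolding on_cycle_at_def by (intro exI[of _ 2]) auto
    thus ?thesis by blast
  qed
qed

lemma upper: "3 \<le> n \<Longrightarrow> stab_time n c \<le> (n + 1) div 2 - 1"
proof -
  assume n: "3 \<le> n"
  have T: "(n + 1) div 2 - 1 = (n - 1) div 2" by linarith
  obtain t where t: "t \<le> (n - 1) div 2" "on_cycle_at n c t" using upper_ex[OF n] by blast
  have "stab_time n c \<le> t" unfolding stab_time_def using t(2) by (rule Least_le)
  thus ?thesis using t T by simp
qed

lemma unst1: "3 \<le> n \<Longrightarrow> b < n \<Longrightarrow> (\<forall>k. a \<le> k \<and> k \<le> b \<longrightarrow> \<not> st n c k) \<Longrightarrow>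
   a < k \<Longrightarrow> k < b \<Longrightarrow> \<not> st n (mm_step n c) k"
proof -
  assume n: "3 \<le> n" and b: "b < n" and U: "\<forall>k. a \<le> k \<and> k \<le> b \<longrightarrow> \<not> st n c k"
    and k: "a < k" "k < b"
  have p: "pv n k = k - 1" using k by (simp add: pv_def)
  have x: "nx n k = k + 1" using k b by (simp add: nx_def)
  have "a \<le> k - 1" "k - 1 \<le> b" "a \<le> k + 1" "k + 1 \<le> b" using k by auto
  hence s0: "\<not> st n c k" "\<not> st n c (k - 1)" "\<not> st n c (k + 1)" using U k by auto
  have f: "mm_step n c k = (\<not> c k)" "mm_step n c (k - 1) = (\<not> c (k - 1))"
    "mm_step n c (k + 1) = (\<not> c (k + 1))"
    using flip1[OF n _ s0(1)] flip1[OF n _ s0(2)] flip1[OF n _ s0(3)] k b by auto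
  show ?thesis using s0(1) f p x by (auto simp: st_def)
qed

lemma unst: "3 \<le> n \<Longrightarrow> b < n \<Longrightarrow> (\<forall>k. a \<le> k \<and> k \<le> b \<longrightarrow> \<not> st n c k) \<Longrightarrow>
   a + r \<le> k \<Longrightarrow> k + r \<le> b \<Longrightarrow> \<not> st n (mm_iter n r c) k"
proof (induction r arbitrary: c a b)
  case 0 thus ?case by (simp add: iter_0)
next
  case (Suc r)
  have "\<forall>k. Suc a \<le> k \<and> k \<le> b - 1 \<longrightarrow> \<not> st n (mm_step n c) k"
    using unst1[OF Suc.prems(1,2,3)] by auto
  from Suc.IH[OF Suc.prems(1) _ this] Suc.prems(2,4,5) show ?case by (simp add: iter_Suc')
qed

lemma no_cycle: "3 \<le> n \<Longrightarrow> i < n \<Longrightarrow> \<not> st n (mm_iter n t c) i \<Longrightarrow>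
   st n (mm_iter n (Suc t) c) i \<Longrightarrow> \<not> on_cycle_at n c t"
proof
  assume n: "3 \<le> n" and i: "i < n" and u: "\<not> st n (mm_iter n t c) i"
    and s: "st n (mm_iter n (Suc t) c) i" and oc: "on_cycle_at n c t"
  then obtain p where p: "p > 0" "col_eq n (mm_iter n (t + p) c) (mm_iter n t c)"
    unfolding on_cycle_at_def by blast
  have "mm_iter n (Suc t + (p - 1)) c i = mm_iter n (Suc t) c i" using persist[OF n i s] by blast
  moreover have "Suc t + (p - 1) = t + p" using p by simp
  moreover have "mm_iter n (Suc t) c i = (\<not> mm_iter n t c i)" using flip1[OF n i u] by (simp add: iter_Suc)
  ultimately show False using p(2) i by (auto simp: col_eq_def)
qed

definition c0 :: "nat \<Rightarrow> nat \<Rightarrow> bool" where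
  "c0 n i = (if even n then even i \<or> i = 1 else even i)"

lemma lower_pair: "3 \<le> n \<Longrightarrow> t < (n - 1) div 2 \<Longrightarrow>
  \<exists>i<n. \<not> st n (mm_iter n t (c0 n)) i \<and> st n (mm_iter n (Suc t) (c0 n)) i"
proof -
  assume n: "3 \<le> n" and t0: "t < (n - 1) div 2"
  have "2 * ((n - 1) div 2) \<le> n - 1" by simp
  hence t: "2 * t + 2 \<le> n - 1" using t0 by linarith
  show ?thesis
  proof (cases "even n")
    case True
    have s: "st n (c0 n) 2" using n True by (simp add: st_def c0_def pv_def)
    have U: "\<forall>k. 3 \<le> k \<and> k \<le> n - 1 \<longrightarrow> \<not> st n (c0 n) k"
    proof (intro allI impI)
      fix k assume k: "3 \<le> k \<and> k \<le> n - 1"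
      have a: "c0 n (pv n k) \<noteq> c0 n k" using k True by (auto simp: c0_def pv_def)
      have b: "c0 n (nx n k) \<noteq> c0 n k"
      proof (cases "k = n - 1")
        case True
        thus ?thesis using \<open>even n\<close> n by (simp add: c0_def nx_def)
      next
        case False
        hence "Suc k < n" using k by linarith
        hence "nx n k = k + 1" by (simp add: nx_def)
        thus ?thesis using k \<open>even n\<close> by (auto simp: c0_def)
      qed
      show "\<not> st n (c0 n) k" using a b by (auto simp: st_def)
    qed
    have t2: "2 * t + 2 \<le> n - 2" using t True by presburger
    have i: "t + 3 < n" using t2 t n True by presburger
    have "\<not> st n (mm_iter n t (c0 n)) (t + 3)"
      by (rule unst[OF n _ U]) (use t2 n True in linarith)+
    moreover have "st n (mm_iter n (Suc t) (c0 n)) (t + 3)"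
    proof -
      have "st n (mm_iter n (Suc t) (c0 n)) ((2 + Suc t) mod n)" using fwd[OF n _ s, of "Suc t"] n by simp
      moreover have "(2 + Suc t) mod n = t + 3" using i by simp
      ultimately show ?thesis by simp
    qed
    ultimately show ?thesis using i by blast
  next
    case False
    have s: "st n (c0 n) 0" using n False by (simp add: st_def c0_def pv_def)
    have U: "\<forall>k. 1 \<le> k \<and> k \<le> n - 2 \<longrightarrow> \<not> st n (c0 n) k"
    proof (intro allI impI)
      fix k assume k: "1 \<le> k \<and> k \<le> n - 2"
      have a: "c0 n (pv n k) \<noteq> c0 n k" using k False by (auto simp: c0_def pv_def)
      have "Suc k < n" using k n by linarith
      hence "nx n k = k + 1" by (simp add: nx_def)
      hence b: "c0 n (nx n k) \<noteq> c0 n k" using k False by (auto simp: c0_def)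
      show "\<not> st n (c0 n) k" using a b by (auto simp: st_def)
    qed
    have i: "t + 1 < n" using t n by linarith
    have "\<not> st n (mm_iter n t (c0 n)) (t + 1)"
      by (rule unst[OF n _ U]) (use t n False in linarith)+
    moreover have "st n (mm_iter n (Suc t) (c0 n)) (t + 1)"
      using fwd[OF n _ s, of "Suc t"] n i by (simp add: add.commute)
    ultimately show ?thesis using i by blast
  qed
qed

theorem theorem2p3:
  fixes n :: nat
  assumes "n \<ge> 3"
  shows "(\<forall>c. stab_time n c \<le> (n + 1) div 2 - 1)
       \<and> (\<exists>c. stab_time n c = (n + 1) div 2 - 1)"
proof -
  have n: "3 \<le> n" using assms .
  have T: "(n + 1) div 2 - 1 = (n - 1) div 2" by linarith
  have "stab_time n (c0 n) = (n - 1) div 2"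
  proof (rule antisym)
    show "stab_time n (c0 n) \<le> (n - 1) div 2" using upper[OF n] T by simp
    show "(n - 1) div 2 \<le> stab_time n (c0 n)"
    proof (rule ccontr)
      assume "\<not> (n - 1) div 2 \<le> stab_time n (c0 n)"
      hence lt: "stab_time n (c0 n) < (n - 1) div 2" by simp
      have ex: "on_cycle_at n (c0 n) (stab_time n (c0 n))"
        unfolding stab_time_def using upper_ex[OF n, of "c0 n"] by (metis LeastI_ex)
      from lower_pair[OF n lt] obtain i where "i < n"
        "\<not> st n (mm_iter n (stab_time n (c0 n)) (c0 n)) i"
        "st n (mm_iter n (Suc (stab_time n (c0 n))) (c0 n)) i" by blast
      from no_cycle[OF n this] ex show False by blast
    qed
  qed
  thus ?thesis using upper[OF n] T by metis
qed

end
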